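(* Let $(X,d)$ be a proper geodesic metric space with a distinguished base point $0$, and let $(x_n)$ and $(y_n)$ be sequences in $X$ which both converge to the same point $\omega\in\partial_d X$ of the metric boundary. Then $\lim_{n\to\infty}(x_n\cdot y_n)=\infty$.
   Context: A metric space is proper if closed bounded sets are compact, and geodesic if any two points $x,y$ are joined by an isometric image of $[0,d(x,y)]$. The Gromov product with respect to the base point $0$ is $(x\cdot y)=\tfrac12\big(d(x,0)+d(y,0)-d(x,y)\big)$. For $y\in X$ let $\varphi_y(x)=d(x,0)-d(x,y)$. The metric compactification $\overline{X}^d$ is the maximal ideal space of the commutative unital C*-algebra generated by the continuous functions vanishing at infinity on $X$, the constants, and the functions $\varphi_y$ ($y\in X$); the metric boundary is $\partial_d X=\overline{X}^d\setminus X$. Concretely, a sequence $(x_n)$ in $X$ converges to a point of $\partial_d X$ iff it eventually leaves every compact subset of $X$ and $\varphi_y(x_n)$ converges for every $y\in X$; two such sequences converge to the same boundary point iff the limits of $\varphi_z$ along them agree for every $z\in X$. *)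

theory Defs
  imports "HOL-Analysis.Analysis"
begin

text \<open>The space X is the whole carrier of a metric-space type 'a.\<close>

definition proper_space :: "'a::metric_space itself \<Rightarrow> bool" where
  "proper_space _ \<longleftrightarrow> (\<forall>S::'a set. closed S \<and> bounded S \<longrightarrow> compact S)"

definition geodesic_space :: "'a::metric_space itself \<Rightarrow> bool" where
  "geodesic_space _ \<longleftrightarrow> (\<forall>x y::'a. \<exists>\<gamma>::real \<Rightarrow> 'a.
      \<gamma> 0 = x \<and> \<gamma> (dist x y) = y \<and>
      (\<forall>s\<in>{0..dist x y}. \<forall>t\<in>{0..dist x y}. dist (\<gamma> s) (\<gamma> t) = \<bar>s - t\<bar>))"

definition gromov_product :: "'a::metric_space \<Rightarrow> 'a \<Rightarrow> 'a \<Rightarrow> real" where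
  "gromov_product b x y = (dist x b + dist y b - dist x y) / 2"

definition phi :: "'a::metric_space \<Rightarrow> 'a \<Rightarrow> 'a \<Rightarrow> real" where
  "phi b y x = dist x b - dist x y"

text \<open>A boundary point of the metric compactification is identified by the values
  it assigns to the generating functions phi_z; a sequence converges to the boundary
  point omega iff it eventually leaves every compact set and phi_z(x_n) tends to omega z
  for every z.\<close>
definition converges_to_boundary :: "'a::metric_space \<Rightarrow> (nat \<Rightarrow> 'a) \<Rightarrow> ('a \<Rightarrow> real) \<Rightarrow> bool" where
  "converges_to_boundary b x \<omega> \<longleftrightarrow>
     (\<forall>K. compact K \<longrightarrow> (\<forall>\<^sub>F n in sequentially. x n \<notin> K)) \<and>
     (\<forall>z. (\<lambda>n. phi b z (x n)) \<longlonglongrightarrow> \<omega> z)"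

end

theory Submission
  imports Defs
begin

lemma omega_large:
  fixes b :: "'a::metric_space" and x :: "nat \<Rightarrow> 'a" and \<omega> :: "'a \<Rightarrow> real"
  assumes P: "proper_space TYPE('a)"
    and G: "geodesic_space TYPE('a)"
    and C: "converges_to_boundary b x \<omega>"
    and R0: "R \<ge> 0"
  shows "\<exists>l. R \<le> \<omega> l"
proof -
  have "\<forall>n. \<exists>\<gamma>::real \<Rightarrow> 'a. \<gamma> 0 = b \<and> \<gamma> (dist b (x n)) = x n \<and>
      (\<forall>s\<in>{0..dist b (x n)}. \<forall>t\<in>{0..dist b (x n)}. dist (\<gamma> s) (\<gamma> t) = \<bar>s - t\<bar>)"
    using G unfolding geodesic_space_def by blast
  then obtain g where g: "\<And>n. g n 0 = b \<and> g n (dist b (x n)) = x n \<and>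
      (\<forall>s\<in>{0..dist b (x n)}. \<forall>t\<in>{0..dist b (x n)}. dist (g n s) (g n t) = \<bar>s - t\<bar>)"
    by metis
  define D where "D n = dist b (x n)" for n
  define z where "z n = g n (min R (D n))" for n
  have H: "\<And>n s t. s \<in> {0..D n} \<Longrightarrow> t \<in> {0..D n} \<Longrightarrow> dist (g n s) (g n t) = \<bar>s - t\<bar>"
    using g by (simp add: D_def)
  have Dp: "D n \<ge> 0" for n by (simp add: D_def)
  have zb: "dist b (z n) = min R (D n)" for n
  proof -
    have "dist (g n 0) (g n (min R (D n))) = \<bar>0 - min R (D n)\<bar>"
      using H[of "min R (D n)" n "D n"] H[of 0 n "min R (D n)"] R0 Dp[of n] by simp
    moreover have "g n (D n) = x n" using g[of n] by (simp add: D_def)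
    ultimately show ?thesis using R0 g[of n] by (simp add: z_def D_def)
  qed
  have zx: "dist (z n) (x n) = D n - min R (D n)" for n
  proof -
    have "dist (g n (min R (D n))) (g n (D n)) = \<bar>min R (D n) - D n\<bar>"
      using H[of "min R (D n)" n "D n"] H[of 0 n "min R (D n)"] R0 Dp[of n] by simp
    moreover have "g n (D n) = x n" using g[of n] by (simp add: D_def)
    ultimately show ?thesis using R0 by (simp add: z_def)
  qed
  have K: "compact (cball b R)"
    using P unfolding proper_space_def by simp
  have zin: "\<forall>n. z n \<in> cball b R" using zb by simp
  obtain l r where lr: "l \<in> cball b R" "strict_mono (r :: nat \<Rightarrow> nat)" "(z \<circ> r) \<longlonglongrightarrow> l"
    using seq_compactE[OF compact_imp_seq_compact[OF K] zin] by blast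
  have ev: "\<forall>\<^sub>F n in sequentially. x n \<notin> cball b R"
    using C K unfolding converges_to_boundary_def by blast
  have "\<forall>\<^sub>F n in sequentially. min R (D n) = R"
    using ev by eventually_elim (auto simp: D_def)
  then have w: "(\<lambda>n. min R (D n)) \<longlonglongrightarrow> R" by (rule tendsto_eventually)
  have w2: "(\<lambda>n. min R (D (r n))) \<longlonglongrightarrow> R"
    using LIMSEQ_subseq_LIMSEQ[OF w lr(2)] by (simp add: comp_def)
  have d2: "(\<lambda>n. dist (z (r n)) l) \<longlonglongrightarrow> dist l l"
    using tendsto_dist[OF lr(3)[unfolded comp_def] tendsto_const] .
  have lower: "(\<lambda>n. min R (D (r n)) - dist (z (r n)) l) \<longlonglongrightarrow> R - 0"
    using tendsto_diff[OF w2 d2] by simp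
  have up: "(\<lambda>n. phi b l (x (r n))) \<longlonglongrightarrow> \<omega> l"
    using LIMSEQ_subseq_LIMSEQ[OF _ lr(2), of "\<lambda>n. phi b l (x n)"] C
    unfolding converges_to_boundary_def by (simp add: comp_def)
  have ineq: "min R (D (r n)) - dist (z (r n)) l \<le> phi b l (x (r n))" for n
  proof -
    have "dist (x (r n)) l \<le> dist (x (r n)) (z (r n)) + dist (z (r n)) l"
      by (rule dist_triangle)
    then show ?thesis using zx[of "r n"] unfolding phi_def D_def
      by (simp add: dist_commute)
  qed
  have "R - 0 \<le> \<omega> l"
    by (rule LIMSEQ_le[OF lower up]) (use ineq in blast)
  then show ?thesis by auto
qed

theorem mainTheorem3:
  fixes b :: "'a::metric_space"
    and x y :: "nat \<Rightarrow> 'a"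
    and \<omega> :: "'a \<Rightarrow> real"
  assumes "proper_space TYPE('a)"
    and "geodesic_space TYPE('a)"
    and "converges_to_boundary b x \<omega>"
    and "converges_to_boundary b y \<omega>"
  shows "filterlim (\<lambda>n. gromov_product b (x n) (y n)) at_top sequentially"
  unfolding filterlim_at_top
proof
  fix Z :: real
  obtain l where l: "max Z 0 + 1 \<le> \<omega> l"
    using omega_large[OF assms(1,2,3), of "max Z 0 + 1"] by auto
  have tx: "(\<lambda>n. phi b l (x n)) \<longlonglongrightarrow> \<omega> l" and ty: "(\<lambda>n. phi b l (y n)) \<longlonglongrightarrow> \<omega> l"
    using assms(3,4) unfolding converges_to_boundary_def by auto
  have "(\<lambda>n. (phi b l (x n) + phi b l (y n)) / 2) \<longlonglongrightarrow> (\<omega> l + \<omega> l) / 2"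
    using tendsto_divide[OF tendsto_add[OF tx ty] tendsto_const[of 2]] by simp
  moreover have "Z < (\<omega> l + \<omega> l) / 2" using l by auto
  ultimately have "\<forall>\<^sub>F n in sequentially. Z < (phi b l (x n) + phi b l (y n)) / 2"
    by (rule order_tendstoD(1))
  then show "\<forall>\<^sub>F n in sequentially. Z \<le> gromov_product b (x n) (y n)"
  proof eventually_elim
    case (elim n)
    have "dist (x n) (y n) \<le> dist (x n) l + dist l (y n)" by (rule dist_triangle)
    then show ?case using elim unfolding gromov_product_def phi_def
      by (simp add: dist_commute)
  qed
qed

end
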